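(* Let $f:X\to\mathcal G$ be convex and $x_0\in\operatorname{dom} f$. If $x_0$ solves the scalarized Stampacchia inequality, i.e. $f(x_0)=Z$ or for all $x\in\operatorname{dom}f$ with $f(x)\ne f(x_0)$ there exists $z^*\in C^-\setminus\{0\}$ with $0<\varphi'_{f,z^*}(x_0,x-x_0)$, then it solves the set-valued Stampacchia inequality, i.e. $f(x_0)=Z$ or for all $x\in\operatorname{dom} f$ with $f(x)\neq f(x_0)$ one has $0\notin f'(x_0,x-x_0)$. If additionally the weak regularity condition $f'(x,u)=\bigcap_{z^*\in C^-\setminus\{0\}}f'_{z^*}(x,u)$ holds for all $x,u\in X$, then $x_0$ solves the set-valued Stampacchia inequality if and only if it solves the scalarized one.
   Context: $X$ real linear space, $Z$ real locally convex Hausdorff space with dual $Z^*$, $C\subseteq Z$ closed convex cone, $0\in C$, $C^-=\{z^*:z^*(c)\le0\ \forall c\in C\}$, $C^-\setminus\{0\}\ne\emptyset$. $\mathcal G=\{A\subseteq Z:A=\operatorname{cl}\operatorname{co}(A+C)\}$; $A\oplus B=\operatorname{cl}\{a+b\}$, $tA=\{ta\}$ ($t>0$), $A\ominus B=\{z:B+\{z\}\subseteq A\}$. $f$ convex: $f(tx_1+(1-t)x_2)\supseteq tf(x_1)\oplus(1-t)f(x_2)$; $\operatorname{dom}f=\{x:f(x)\ne\emptyset\}$. For $g:X\to\mathcal G$, $g'(x,u)=\bigcap_{t_0>0}\operatorname{cl}\operatorname{co}\bigcup_{0<t<t_0}\frac1t(g(x+tu)\ominus g(x))$. On $\overline{\mathbb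 R}$: inf-addition $\dot+$ ($(-\infty)\dot+(+\infty)=+\infty$), $r\ominus s=\inf\{t\in\mathbb R:r\le s\dot+t\}$ ($\inf\emptyset=+\infty$). $\varphi_{f,z^*}(x)=\inf\{-z^*(z):z\in f(x)\}$ ($+\infty$ if $f(x)=\emptyset$), $\varphi'_{f,z^*}(x,u)=\inf_{t>0}\frac1t(\varphi_{f,z^*}(x+tu)\ominus\varphi_{f,z^*}(x))$. $f_{z^*}(x)=\{z:\varphi_{f,z^*}(x)\le -z^*(z)\}$, $f'_{z^*}$ its directional derivative. *)

theory Defs
  imports "HOL-Analysis.Analysis"
begin

section \<open>Locally convex Hausdorff spaces (Hausdorff = sort t2_space)\<close>

definition locally_convex_tvs :: "'z::{real_vector,topological_space} itself \<Rightarrow> bool" where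
  "locally_convex_tvs _ \<longleftrightarrow>
     continuous_on UNIV (\<lambda>p::'z \<times> 'z. fst p + snd p) \<and>
     continuous_on UNIV (\<lambda>p::real \<times> 'z. fst p *\<^sub>R snd p) \<and>
     (\<forall>U (x::'z). open U \<and> x \<in> U \<longrightarrow> (\<exists>V. open V \<and> convex V \<and> x \<in> V \<and> V \<subseteq> U))"

definition dual_space :: "('z::{real_vector,topological_space} \<Rightarrow> real) set" where
  "dual_space = {zs. linear zs \<and> continuous_on UNIV zs}"

definition polar_cone :: "'z::{real_vector,topological_space} set \<Rightarrow> ('z \<Rightarrow> real) set" where
  "polar_cone C = {zs \<in> dual_space. \<forall>c\<in>C. zs c \<le> 0}"

definition set_add :: "'z::real_vector set \<Rightarrow> 'z set \<Rightarrow> 'z set" where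
  "set_add A B = {a + b | a b. a \<in> A \<and> b \<in> B}"

definition oplus_set :: "'z::{real_vector,topological_space} set \<Rightarrow> 'z set \<Rightarrow> 'z set" where
  "oplus_set A B = closure (set_add A B)"

definition smul_set :: "real \<Rightarrow> 'z::real_vector set \<Rightarrow> 'z set" where
  "smul_set t A = (\<lambda>a. t *\<^sub>R a) ` A"

definition ominus_set :: "'z::real_vector set \<Rightarrow> 'z set \<Rightarrow> 'z set" where
  "ominus_set A B = {z. set_add B {z} \<subseteq> A}"

definition G_space :: "'z::{real_vector,topological_space} set \<Rightarrow> 'z set set" where
  "G_space C = {A. A = closure (convex hull (set_add A C))}"

definition sv_convex :: "('x::real_vector \<Rightarrow> 'z::{real_vector,topological_space} set) \<Rightarrow> bool" where
  "sv_convex f \<longleftrightarrow> (\<forall>x1 x2 t. 0 < t \<and> t < 1 \<longrightarrow>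
      oplus_set (smul_set t (f x1)) (smul_set (1 - t) (f x2)) \<subseteq> f (t *\<^sub>R x1 + (1 - t) *\<^sub>R x2))"

definition sv_dom :: "('x \<Rightarrow> 'z set) \<Rightarrow> 'x set" where
  "sv_dom f = {x. f x \<noteq> {}}"

definition sv_dir_deriv ::
  "('x::real_vector \<Rightarrow> 'z::{real_vector,topological_space} set) \<Rightarrow> 'x \<Rightarrow> 'x \<Rightarrow> 'z set" where
  "sv_dir_deriv g x u = (\<Inter>t0\<in>{t0::real. 0 < t0}.
      closure (convex hull (\<Union>t\<in>{t::real. 0 < t \<and> t < t0}.
          smul_set (1 / t) (ominus_set (g (x + t *\<^sub>R u)) (g x)))))"

section \<open>Extended reals (Isabelle's ereal addition is inf-addition: \<infinity> + -\<infinity> = \<infinity>)\<close>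

definition eminus :: "ereal \<Rightarrow> ereal \<Rightarrow> ereal" where
  "eminus r s = Inf (ereal ` {t::real. r \<le> s + ereal t})"

definition phi :: "('x \<Rightarrow> 'z set) \<Rightarrow> ('z \<Rightarrow> real) \<Rightarrow> 'x \<Rightarrow> ereal" where
  "phi f zs x = Inf ((\<lambda>z. ereal (- zs z)) ` f x)"

definition phi_dir_deriv ::
  "('x::real_vector \<Rightarrow> 'z set) \<Rightarrow> ('z \<Rightarrow> real) \<Rightarrow> 'x \<Rightarrow> 'x \<Rightarrow> ereal" where
  "phi_dir_deriv f zs x u =
     (INF t\<in>{t::real. 0 < t}. ereal (1 / t) * eminus (phi f zs (x + t *\<^sub>R u)) (phi f zs x))"

definition f_scal :: "('x \<Rightarrow> 'z set) \<Rightarrow> ('z \<Rightarrow> real) \<Rightarrow> 'x \<Rightarrow> 'z set" where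
  "f_scal f zs x = {z. phi f zs x \<le> ereal (- zs z)}"

definition scalar_stampacchia ::
  "'z::{real_vector,topological_space} set \<Rightarrow> ('x::real_vector \<Rightarrow> 'z set) \<Rightarrow> 'x \<Rightarrow> bool" where
  "scalar_stampacchia C f x0 \<longleftrightarrow> f x0 = UNIV \<or>
     (\<forall>x\<in>sv_dom f. f x \<noteq> f x0 \<longrightarrow>
        (\<exists>zs\<in>polar_cone C - {\<lambda>_. 0}. 0 < phi_dir_deriv f zs x0 (x - x0)))"

definition setvalued_stampacchia ::
  "('x::real_vector \<Rightarrow> 'z::{real_vector,topological_space} set) \<Rightarrow> 'x \<Rightarrow> bool" where
  "setvalued_stampacchia f x0 \<longleftrightarrow> f x0 = UNIV \<or>
     (\<forall>x\<in>sv_dom f. f x \<noteq> f x0 \<longrightarrow> 0 \<notin> sv_dir_deriv f x0 (x - x0))"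

definition weak_regular ::
  "'z::{real_vector,topological_space} set \<Rightarrow> ('x::real_vector \<Rightarrow> 'z set) \<Rightarrow> bool" where
  "weak_regular C f \<longleftrightarrow> (\<forall>x u. sv_dir_deriv f x u =
      (\<Inter>zs\<in>polar_cone C - {\<lambda>_. 0}. sv_dir_deriv (f_scal f zs) x u))"

end

theory Submission
  imports Defs
begin

lemma phi_ominus:
  fixes zs :: "'z::real_vector \<Rightarrow> real"
  assumes lin: "linear zs" and z: "set_add B {z} \<subseteq> A"
  shows "Inf ((\<lambda>w. ereal (- zs w)) ` A) \<le> Inf ((\<lambda>w. ereal (- zs w)) ` B) + ereal (- zs z)"
proof -
  have "Inf ((\<lambda>w. ereal (- zs w)) ` A) - ereal (- zs z) \<le> Inf ((\<lambda>w. ereal (- zs w)) ` B)"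
  proof (rule Inf_greatest)
    fix y assume "y \<in> (\<lambda>w. ereal (- zs w)) ` B"
    then obtain b where b: "b \<in> B" "y = ereal (- zs b)" by auto
    have "b + z \<in> A" using z b unfolding set_add_def by auto
    hence "Inf ((\<lambda>w. ereal (- zs w)) ` A) \<le> ereal (- zs (b + z))" by (rule INF_lower)
    also have "\<dots> = y + ereal (- zs z)" using lin b by (simp add: linear_add)
    finally show "Inf ((\<lambda>w. ereal (- zs w)) ` A) - ereal (- zs z) \<le> y" by (simp add: ereal_minus_le)
  qed
  thus ?thesis by (simp add: ereal_minus_le)
qed

lemma deriv_le:
  fixes g :: "'x::real_vector \<Rightarrow> 'z::{real_vector,topological_space} set"
  assumes lin: "linear zs" and cont: "continuous_on UNIV zs" and z: "z \<in> sv_dir_deriv g x u"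
  shows "phi_dir_deriv g zs x u \<le> ereal (- zs z)"
proof -
  define p where "p = phi_dir_deriv g zs x u"
  define H where "H = {w. p \<le> ereal (- zs w)}"
  define U where "U = (\<Union>t\<in>{t::real. 0 < t \<and> t < 1}. smul_set (1 / t) (ominus_set (g (x + t *\<^sub>R u)) (g x)))"
  have closedH: "closed H"
  proof (cases p)
    case (real r) then have "H = {w. zs w \<le> - r}" unfolding H_def by auto
    then show ?thesis using closed_Collect_le[OF cont continuous_on_const] by simp
  next
    case PInf then have "H = {}" unfolding H_def by auto thus ?thesis by simp
  next
    case MInf then have "H = UNIV" unfolding H_def by auto thus ?thesis by simp
  qed
  have convH: "convex H"
  proof (rule convexI)
    fix w1 w2 and a b :: real
    assume w1: "w1 \<in> H" and w2: "w2 \<in> H" and ab0: "0 \<le> a" "0 \<le> b" "a + b = 1"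
    hence ab: "0 \<le> a \<and> 0 \<le> b \<and> a + b = 1" by simp
    have eq: "zs (a *\<^sub>R w1 + b *\<^sub>R w2) = a * zs w1 + b * zs w2" using lin by (simp add: linear_add linear_scale)
    show "a *\<^sub>R w1 + b *\<^sub>R w2 \<in> H"
    proof (cases p)
      case (real r)
      have r1: "r \<le> - zs w1" and r2: "r \<le> - zs w2" using w1 w2 real unfolding H_def by auto
      have "a * r \<le> a * (- zs w1)" using ab r1 by (intro mult_left_mono) auto
      moreover have "b * r \<le> b * (- zs w2)" using ab r2 by (intro mult_left_mono) auto
      ultimately have s1: "a * r + b * r \<le> a * (- zs w1) + b * (- zs w2)" by linarith
      have "a * r + b * r = (a + b) * r" by (simp add: algebra_simps)
      hence "a * r + b * r = r" using ab by simp
      hence "r \<le> - (a * zs w1 + b * zs w2)" using s1 by simp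
      thus ?thesis using real eq unfolding H_def by simp
    next
      case PInf then show ?thesis using w1 unfolding H_def by simp
    next
      case MInf then show ?thesis unfolding H_def by simp
    qed
  qed
  have sub: "U \<subseteq> H"
    unfolding U_def
  proof clarify
    fix t w assume t: "0 < t" "t < 1" and w: "w \<in> smul_set (1 / t) (ominus_set (g (x + t *\<^sub>R u)) (g x))"
    then obtain z' where z': "set_add (g x) {z'} \<subseteq> g (x + t *\<^sub>R u)" and wz: "w = (1 / t) *\<^sub>R z'"
      unfolding smul_set_def ominus_set_def by auto
    have "phi g zs (x + t *\<^sub>R u) \<le> phi g zs x + ereal (- zs z')"
      unfolding phi_def by (rule phi_ominus[OF lin z'])
    hence e: "eminus (phi g zs (x + t *\<^sub>R u)) (phi g zs x) \<le> ereal (- zs z')"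
      unfolding eminus_def by (intro Inf_lower) auto
    have "p \<le> ereal (1 / t) * eminus (phi g zs (x + t *\<^sub>R u)) (phi g zs x)"
      unfolding p_def phi_dir_deriv_def using t by (intro INF_lower) auto
    also have "\<dots> \<le> ereal (1 / t) * ereal (- zs z')" using t e by (intro ereal_mult_left_mono) auto
    also have "\<dots> = ereal (- zs w)" using lin by (simp add: wz linear_scale)
    finally show "w \<in> H" unfolding H_def by simp
  qed
  have "closure (convex hull U) \<subseteq> H" using closedH convH sub by (meson closure_minimal hull_minimal)
  moreover have "z \<in> closure (convex hull U)" using z unfolding sv_dir_deriv_def U_def
    by (rule INT_D) simp
  ultimately show ?thesis unfolding H_def p_def by auto
qed


lemma conv_step:
  fixes f :: "'x::real_vector \<Rightarrow> 'z::{real_vector,topological_space} set"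
  assumes f_convex: "sv_convex f" and lin: "linear zs"
    and st: "0 < s" "s < t"
    and bt: "phi f zs (x0 + t *\<^sub>R u) \<le> phi f zs x0 + ereal (t * \<epsilon>)"
  shows "phi f zs (x0 + s *\<^sub>R u) \<le> phi f zs x0 + ereal (s * \<epsilon>)"
proof -
  define l where "l = s / t"
  have l: "0 < l" "l < 1" "l * t = s" using st unfolding l_def by auto
  have xeq: "l *\<^sub>R (x0 + t *\<^sub>R u) + (1 - l) *\<^sub>R x0 = x0 + s *\<^sub>R u"
  proof -
    have "l *\<^sub>R (x0 + t *\<^sub>R u) + (1 - l) *\<^sub>R x0 = x0 + (l * t) *\<^sub>R u" by (simp add: algebra_simps)
    thus ?thesis using l by simp
  qed
  have cv: "oplus_set (smul_set l (f (x0 + t *\<^sub>R u))) (smul_set (1 - l) (f x0)) \<subseteq> f (x0 + s *\<^sub>R u)"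
    using f_convex l unfolding sv_convex_def by (metis xeq)
  have "phi f zs (x0 + s *\<^sub>R u) - ereal (s * \<epsilon>) \<le> phi f zs x0"
    unfolding phi_def[of f zs x0]
  proof (rule Inf_greatest)
    fix y assume "y \<in> (\<lambda>z. ereal (- zs z)) ` f x0"
    then obtain a2 where a2: "a2 \<in> f x0" "y = ereal (- zs a2)" by auto
    have "phi f zs (x0 + s *\<^sub>R u) \<le> ereal (- zs a2 + s * \<epsilon>)"
    proof (rule ereal_le_epsilon2)
      fix d :: real assume d: "0 < d"
      define c where "c = - zs a2 + t * \<epsilon>"
      have "phi f zs x0 \<le> ereal (- zs a2)" unfolding phi_def using a2 by (intro INF_lower) auto
      hence "phi f zs x0 + ereal (t * \<epsilon>) \<le> ereal (- zs a2) + ereal (t * \<epsilon>)" by (rule add_right_mono)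
      hence "phi f zs (x0 + t *\<^sub>R u) \<le> ereal c" using bt unfolding c_def by simp
      also have "\<dots> < ereal (c + d)" using d by simp
      finally have "Inf ((\<lambda>z. ereal (- zs z)) ` f (x0 + t *\<^sub>R u)) < ereal (c + d)" unfolding phi_def .
      then obtain a1 where a1: "a1 \<in> f (x0 + t *\<^sub>R u)" "ereal (- zs a1) < ereal (c + d)"
        by (auto simp: INF_less_iff)
      have A1: "- zs a1 < c + d" using a1 by simp
      have mem: "l *\<^sub>R a1 + (1 - l) *\<^sub>R a2 \<in> f (x0 + s *\<^sub>R u)"
      proof -
        have "l *\<^sub>R a1 + (1 - l) *\<^sub>R a2 \<in> set_add (smul_set l (f (x0 + t *\<^sub>R u))) (smul_set (1 - l) (f x0))"
          using a1 a2 unfolding set_add_def smul_set_def by blast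
        thus ?thesis using cv closure_subset unfolding oplus_set_def by blast
      qed
      have "phi f zs (x0 + s *\<^sub>R u) \<le> ereal (- zs (l *\<^sub>R a1 + (1 - l) *\<^sub>R a2))"
        unfolding phi_def using mem by (intro INF_lower) auto
      also have "- zs (l *\<^sub>R a1 + (1 - l) *\<^sub>R a2) = l * (- zs a1) + (1 - l) * (- zs a2)"
      proof -
        have "zs (l *\<^sub>R a1 + (1 - l) *\<^sub>R a2) = l * zs a1 + (1 - l) * zs a2"
          using lin by (simp only: linear_add[OF lin] linear_scale[OF lin] real_scaleR_def)
        thus ?thesis by (simp add: algebra_simps)
      qed
      also have "l * (- zs a1) \<le> l * (c + d)" using l A1 by (intro mult_left_mono) auto
      hence "l * (- zs a1) + (1 - l) * (- zs a2) \<le> l * (c + d) + (1 - l) * (- zs a2)" by simp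
      also have "l * (c + d) + (1 - l) * (- zs a2) = - zs a2 + (l * t) * \<epsilon> + l * d"
        unfolding c_def by (simp add: algebra_simps)
      also have "\<dots> \<le> - zs a2 + s * \<epsilon> + d" using l d by simp
      finally show "phi f zs (x0 + s *\<^sub>R u) \<le> ereal (- zs a2 + s * \<epsilon>) + ereal d" by simp
    qed
    thus "phi f zs (x0 + s *\<^sub>R u) - ereal (s * \<epsilon>) \<le> y" using a2 by (simp add: ereal_minus_le)
  qed
  thus ?thesis by (simp add: ereal_minus_le)
qed


lemma deriv_ge:
  fixes f :: "'x::real_vector \<Rightarrow> 'z::{real_vector,t2_space} set"
  assumes lctvs: "locally_convex_tvs TYPE('z)"
    and f_convex: "sv_convex f" and lin: "linear zs" and e: "zs e = -1"
    and le: "phi_dir_deriv f zs x0 u \<le> 0"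
  shows "0 \<in> sv_dir_deriv (f_scal f zs) x0 u"
  unfolding sv_dir_deriv_def
proof (rule INT_I)
  fix t0 :: real assume "t0 \<in> {t0. 0 < t0}"
  hence t0: "0 < t0" by simp
  define U where "U = (\<Union>t\<in>{t::real. 0 < t \<and> t < t0}.
          smul_set (1 / t) (ominus_set (f_scal f zs (x0 + t *\<^sub>R u)) (f_scal f zs x0)))"
  have inU: "\<epsilon> *\<^sub>R e \<in> U" if eps: "0 < \<epsilon>" for \<epsilon> :: real
  proof -
    have "phi_dir_deriv f zs x0 u < ereal \<epsilon>" using le eps by (simp add: le_less_trans)
    then obtain t where t: "0 < t" and lt: "ereal (1 / t) * eminus (phi f zs (x0 + t *\<^sub>R u)) (phi f zs x0) < ereal \<epsilon>"
      unfolding phi_dir_deriv_def by (auto simp: INF_less_iff)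
    have em: "eminus (phi f zs (x0 + t *\<^sub>R u)) (phi f zs x0) < ereal (t * \<epsilon>)"
    proof (rule ccontr)
      assume "\<not> ?thesis"
      hence "ereal (t * \<epsilon>) \<le> eminus (phi f zs (x0 + t *\<^sub>R u)) (phi f zs x0)" by simp
      hence "ereal (1 / t) * ereal (t * \<epsilon>) \<le> ereal (1 / t) * eminus (phi f zs (x0 + t *\<^sub>R u)) (phi f zs x0)"
        using t by (intro ereal_mult_left_mono) auto
      moreover have "ereal (1 / t) * ereal (t * \<epsilon>) = ereal \<epsilon>" using t by simp
      ultimately show False using lt by simp
    qed
    then obtain r where r: "phi f zs (x0 + t *\<^sub>R u) \<le> phi f zs x0 + ereal r" "ereal r < ereal (t * \<epsilon>)"
      unfolding eminus_def by (auto simp: Inf_less_iff)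
    have bt: "phi f zs (x0 + t *\<^sub>R u) \<le> phi f zs x0 + ereal (t * \<epsilon>)"
      using r(1) add_left_mono[OF less_imp_le[OF r(2)], of "phi f zs x0"] by (rule order_trans)
    define s where "s = (if t < t0 then t else t0 / 2)"
    have s: "0 < s" "s < t0" using t t0 unfolding s_def by auto
    have bs: "phi f zs (x0 + s *\<^sub>R u) \<le> phi f zs x0 + ereal (s * \<epsilon>)"
    proof (cases "t < t0")
      case True then show ?thesis using bt unfolding s_def by simp
    next
      case False
      hence "s < t" using t0 unfolding s_def by auto
      then show ?thesis using conv_step[OF f_convex lin s(1) _ bt] by simp
    qed
    have om: "s *\<^sub>R (\<epsilon> *\<^sub>R e) \<in> ominus_set (f_scal f zs (x0 + s *\<^sub>R u)) (f_scal f zs x0)"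
      unfolding ominus_set_def set_add_def f_scal_def
    proof clarify
      fix w assume w: "phi f zs x0 \<le> ereal (- zs w)"
      have "zs (w + s *\<^sub>R (\<epsilon> *\<^sub>R e)) = zs w - s * \<epsilon>"
        using e by (simp add: linear_add[OF lin] linear_scale[OF lin])
      moreover have "phi f zs (x0 + s *\<^sub>R u) \<le> ereal (- zs w) + ereal (s * \<epsilon>)"
        using bs add_right_mono[OF w, of "ereal (s * \<epsilon>)"] by (rule order_trans)
      ultimately show "phi f zs (x0 + s *\<^sub>R u) \<le> ereal (- zs (w + s *\<^sub>R (\<epsilon> *\<^sub>R e)))" by simp
    qed
    have "\<epsilon> *\<^sub>R e = (1 / s) *\<^sub>R (s *\<^sub>R (\<epsilon> *\<^sub>R e))" using s by simp
    hence "\<epsilon> *\<^sub>R e \<in> smul_set (1 / s) (ominus_set (f_scal f zs (x0 + s *\<^sub>R u)) (f_scal f zs x0))"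
      unfolding smul_set_def using om by blast
    thus ?thesis unfolding U_def using s by blast
  qed
  have cont: "continuous_on UNIV (\<lambda>p::real \<times> 'z. fst p *\<^sub>R snd p)"
    using lctvs unfolding locally_convex_tvs_def by blast
  have "continuous_on UNIV ((\<lambda>p::real \<times> 'z. fst p *\<^sub>R snd p) \<circ> (\<lambda>x. (x, e)))"
    by (rule continuous_on_compose[OF continuous_on_Pair[OF continuous_on_id continuous_on_const]])
       (rule continuous_on_subset[OF cont], simp)
  hence c2: "continuous_on UNIV (\<lambda>x::real. x *\<^sub>R e)" by (simp add: o_def)
  hence "((\<lambda>x::real. x *\<^sub>R e) \<longlongrightarrow> 0 *\<^sub>R e) (at 0)"
    by (metis continuous_on_def UNIV_I at_within_open open_UNIV)
  hence lim: "((\<lambda>x::real. x *\<^sub>R e) \<longlongrightarrow> 0) (at_right 0)"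
    by (simp add: filterlim_at_split)
  have "(0::'z) \<in> closure U"
  proof (rule Lim_in_closed_set[OF closed_closure _ _ lim])
    show "\<forall>\<^sub>F x in at_right 0. x *\<^sub>R e \<in> closure U"
      using eventually_at_right_less[of "0::real"] inU closure_subset
      by (auto elim!: eventually_mono)
    show "at_right (0::real) \<noteq> bot" by simp
  qed
  moreover have "closure U \<subseteq> closure (convex hull U)" by (rule closure_mono[OF hull_subset])
  ultimately show "0 \<in> closure (convex hull (\<Union>t\<in>{t::real. 0 < t \<and> t < t0}.
          smul_set (1 / t) (ominus_set (f_scal f zs (x0 + t *\<^sub>R u)) (f_scal f zs x0))))"
    unfolding U_def by blast
qed


lemma polar_props:
  assumes "zs \<in> polar_cone C - {\<lambda>_. 0}"
  shows "linear zs" "continuous_on UNIV zs" "\<exists>e. zs e = -1"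
proof -
  show lin: "linear zs" using assms unfolding polar_cone_def dual_space_def by auto
  show "continuous_on UNIV zs" using assms unfolding polar_cone_def dual_space_def by auto
  from assms obtain v where v: "zs v \<noteq> 0" by (metis DiffD2 ext singletonI)
  have "zs ((-1 / zs v) *\<^sub>R v) = -1" using v by (simp add: linear_neg[OF lin] linear_scale[OF lin])
  thus "\<exists>e. zs e = -1" by blast
qed

theorem mainTheorem12:
  fixes C :: "'z::{real_vector,t2_space} set"
    and f :: "'x::real_vector \<Rightarrow> 'z set"
    and x0 :: 'x
  assumes lctvs: "locally_convex_tvs TYPE('z)"
    and C_closed: "closed C" and C_cone: "convex_cone C" and C_zero: "0 \<in> C"
    and C_polar: "polar_cone C - {\<lambda>_. 0} \<noteq> {}"
    and f_G: "\<forall>x. f x \<in> G_space C"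
    and f_convex: "sv_convex f"
    and x0_dom: "x0 \<in> sv_dom f"
  shows "(scalar_stampacchia C f x0 \<longrightarrow> setvalued_stampacchia f x0) \<and>
         (weak_regular C f \<longrightarrow>
            (setvalued_stampacchia f x0 \<longleftrightarrow> scalar_stampacchia C f x0))"
proof -
  have P1: "setvalued_stampacchia f x0" if sc: "scalar_stampacchia C f x0"
  proof (cases "f x0 = UNIV")
    case True thus ?thesis unfolding setvalued_stampacchia_def by simp
  next
    case False
    show ?thesis unfolding setvalued_stampacchia_def
    proof (intro disjI2 ballI impI)
      fix x assume x: "x \<in> sv_dom f" "f x \<noteq> f x0"
      then obtain zs where zs: "zs \<in> polar_cone C - {\<lambda>_. 0}"
        and pos: "0 < phi_dir_deriv f zs x0 (x - x0)"
        using sc False unfolding scalar_stampacchia_def by blast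
      show "0 \<notin> sv_dir_deriv f x0 (x - x0)"
      proof
        assume "0 \<in> sv_dir_deriv f x0 (x - x0)"
        from deriv_le[OF polar_props(1,2)[OF zs] this]
        have "phi_dir_deriv f zs x0 (x - x0) \<le> 0" using linear_0[OF polar_props(1)[OF zs]] by (simp add: zero_ereal_def)
        thus False using pos by simp
      qed
    qed
  qed
  have P2: "scalar_stampacchia C f x0" if wr: "weak_regular C f" and sv: "setvalued_stampacchia f x0"
  proof (cases "f x0 = UNIV")
    case True thus ?thesis unfolding scalar_stampacchia_def by simp
  next
    case False
    show ?thesis unfolding scalar_stampacchia_def
    proof (intro disjI2 ballI impI)
      fix x assume x: "x \<in> sv_dom f" "f x \<noteq> f x0"
      hence "0 \<notin> sv_dir_deriv f x0 (x - x0)" using sv False unfolding setvalued_stampacchia_def by blast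
      hence "0 \<notin> (\<Inter>zs\<in>polar_cone C - {\<lambda>_. 0}. sv_dir_deriv (f_scal f zs) x0 (x - x0))"
        using wr unfolding weak_regular_def by simp
      then obtain zs where zs: "zs \<in> polar_cone C - {\<lambda>_. 0}"
        and nz: "0 \<notin> sv_dir_deriv (f_scal f zs) x0 (x - x0)" by blast
      obtain e where e: "zs e = -1" using polar_props(3)[OF zs] by blast
      have "0 < phi_dir_deriv f zs x0 (x - x0)"
      proof (rule ccontr)
        assume "\<not> ?thesis"
        hence "phi_dir_deriv f zs x0 (x - x0) \<le> 0" by simp
        from deriv_ge[OF lctvs f_convex polar_props(1)[OF zs] e this] nz show False by simp
      qed
      thus "\<exists>zs\<in>polar_cone C - {\<lambda>_. 0}. 0 < phi_dir_deriv f zs x0 (x - x0)" using zs by blast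
    qed
  qed
  show ?thesis using P1 P2 by blast
qed

end
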